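(* There is an absolute constant $C>0$ such that for all scalars $\beta>0$ and $n\in\mathbb{N}$ there are vectors $\mathbf{a},\mathbf{u},\mathbf{q}\in\mathbb{R}^{2n+2}$ with $\psi_n(\beta t)=\mathbf{a}^\top[\mathbf{u}t+\mathbf{q}]_+$ for all $t\in\mathbb{R}$, $\mathbf{u}^\top\mathbf{q}=0$, $\|\mathbf{u}\|=1$, and $\|\mathbf{a}\|^2+\|\mathbf{q}\|^2\le C(n^4\beta^2+\beta^{-2})$.
   Context: The sawtooth $\psi_n:\mathbb{R}\to[-1,1]$ is $\psi_n(t)=-2n[t+1]_++2n[t-1]_++4n\sum_{j=1}^n\big((-1)^{j+n+1}[t-\tfrac{2j-1}{2n}]_++(-1)^{j+n}[t+\tfrac{2j-1}{2n}]_+\big)$; $[\cdot]_+$ is the entrywise ReLU. *)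

theory Defs
  imports Complex_Main
begin

definition relu :: "real \<Rightarrow> real" where
  "relu x = max x 0"

definition sawtooth :: "nat \<Rightarrow> real \<Rightarrow> real" where
  "sawtooth n t =
     - 2 * real n * relu (t + 1) + 2 * real n * relu (t - 1)
     + 4 * real n * (\<Sum>j=1..n.
          (-1) ^ (j + n + 1) * relu (t - (2 * real j - 1) / (2 * real n))
        + (-1) ^ (j + n) * relu (t + (2 * real j - 1) / (2 * real n)))"

text \<open>Vectors in R^m are lists of length m; dot product and Euclidean norm.\<close>
definition dotp :: "real list \<Rightarrow> real list \<Rightarrow> real" where
  "dotp x y = (\<Sum>i<length x. x ! i * y ! i)"

definition enorm :: "real list \<Rightarrow> real" where
  "enorm x = sqrt (\<Sum>i<length x. (x ! i)^2)"

definition relu_net :: "real list \<Rightarrow> real list \<Rightarrow> real list \<Rightarrow> real \<Rightarrow> real" where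
  "relu_net a u q t = (\<Sum>i<length a. a ! i * relu (u ! i * t + q ! i))"

end

theory Submission
  imports Defs
begin

definition bb :: "nat \<Rightarrow> nat \<Rightarrow> real" where
  "bb n i = (if i div 2 = 0 then (if even i then 1 else -1)
     else (if even i then - ((2 * real (i div 2) - 1) / (2 * real n)) else (2 * real (i div 2) - 1) / (2 * real n)))"

definition al :: "nat \<Rightarrow> nat \<Rightarrow> real" where
  "al n i = (if i div 2 = 0 then (if even i then - 2 * real n else 2 * real n)
     else 4 * real n * (if even i then (-1) ^ (i div 2 + n + 1) else (-1) ^ (i div 2 + n)))"

lemma sum_pairs: "(\<Sum>i<2*m. f i) = (\<Sum>k<m. f (2*k) + f (2*k+1))" for f :: "nat \<Rightarrow> real"
  by (induction m) (auto simp: sum.distrib)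

lemma relu_scale: "c \<ge> 0 \<Longrightarrow> relu (c * x) = c * relu x"
  unfolding relu_def by (auto simp: max_def mult_le_0_iff zero_le_mult_iff)

lemma sum_shift1: "(\<Sum>j=1..n. f j) = (\<Sum>k<n. f (Suc k))" for f :: "nat \<Rightarrow> real"
  by (induction n) auto

lemma saw_eq: "sawtooth n x = (\<Sum>i<2*(n+1). al n i * relu (x + bb n i))"
proof -
  have "(\<Sum>i<2*(n+1). al n i * relu (x + bb n i)) =
        (\<Sum>k<n+1. al n (2*k) * relu (x + bb n (2*k)) + al n (2*k+1) * relu (x + bb n (2*k+1)))"
    by (rule sum_pairs)
  also have "\<dots> = (al n 0 * relu (x + bb n 0) + al n 1 * relu (x + bb n 1)) +
     (\<Sum>k<n. al n (2*Suc k) * relu (x + bb n (2*Suc k)) + al n (2*Suc k+1) * relu (x + bb n (2*Suc k+1)))"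
    unfolding Suc_eq_plus1[symmetric] sum.lessThan_Suc_shift by simp
  also have "\<dots> = sawtooth n x"
    unfolding sawtooth_def sum_shift1
    by (simp add: al_def bb_def sum_distrib_left algebra_simps)
  finally show ?thesis by simp
qed

lemma bb_bound: "i < 2*(n+1) \<Longrightarrow> \<bar>bb n i\<bar> \<le> 1"
proof -
  assume i: "i < 2*(n+1)"
  show ?thesis
  proof (cases "i div 2 = 0")
    case True then show ?thesis by (simp add: bb_def)
  next
    case False
    then have k: "1 \<le> i div 2" "i div 2 \<le> n" using i by auto
    then have "real (i div 2) \<le> real n" "1 \<le> real (i div 2)" by simp_all
    then have "\<bar>(2 * real (i div 2) - 1) / (2 * real n)\<bar> \<le> 1"
      by (simp add: abs_le_iff divide_le_eq)
    then show ?thesis using False by (simp add: bb_def)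
  qed
qed

lemma neg1sq: "((-1::real)^k)^2 = 1"
  by (simp add: power2_eq_square flip: power_add)

lemma al_bound: "(al n i)^2 \<le> 16 * (real n)^2"
  by (simp add: al_def power_mult_distrib neg1sq)

lemma sum_bb: "(\<Sum>i<2*(n+1). bb n i) = 0"
proof -
  have "\<And>k. bb n (2*k) + bb n (2*k+1) = 0" by (simp add: bb_def)
  then show ?thesis by (subst sum_pairs) simp
qed

theorem lemma11:
  shows "\<exists>C::real. C > 0 \<and>
    (\<forall>(\<beta>::real) (n::nat). \<beta> > 0 \<longrightarrow>
      (\<exists>a u q :: real list.
         length a = 2 * n + 2 \<and> length u = 2 * n + 2 \<and> length q = 2 * n + 2 \<and>
         (\<forall>t::real. sawtooth n (\<beta> * t) = relu_net a u q t) \<and>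
         dotp u q = 0 \<and> enorm u = 1 \<and>
         (enorm a)^2 + (enorm q)^2 \<le> C * (real n ^ 4 * \<beta>^2 + 1 / \<beta>^2)))"
proof (intro exI[of _ 256] conjI allI impI)
  fix \<beta> :: real and n :: nat
  assume b: "\<beta> > 0"
  define m where "m = 2 * n + 2"
  define s where "s = sqrt (real m)"
  have m: "m = 2*(n+1)" by (simp add: m_def)
  have s0: "s > 0" by (simp add: s_def m_def)
  have ss: "s * s = real m" by (simp add: s_def)
  define a where "a = map (\<lambda>i. al n i * \<beta> * s) [0..<m]"
  define u where "u = map (\<lambda>i. 1 / s) [0..<m]"
  define q where "q = map (\<lambda>i. bb n i / (\<beta> * s)) [0..<m]"
  show "\<exists>a u q :: real list.
         length a = 2 * n + 2 \<and> length u = 2 * n + 2 \<and> length q = 2 * n + 2 \<and>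
         (\<forall>t::real. sawtooth n (\<beta> * t) = relu_net a u q t) \<and>
         dotp u q = 0 \<and> enorm u = 1 \<and>
         (enorm a)^2 + (enorm q)^2 \<le> 256 * (real n ^ 4 * \<beta>^2 + 1 / \<beta>^2)"
  proof (intro exI conjI allI)
    show "length a = 2 * n + 2" "length u = 2 * n + 2" "length q = 2 * n + 2"
      by (simp_all add: a_def u_def q_def m_def)
  next
    fix t
    have "relu_net a u q t = (\<Sum>i<m. al n i * \<beta> * s * relu (1 / s * t + bb n i / (\<beta> * s)))"
      by (simp add: relu_net_def a_def u_def q_def)
    also have "\<dots> = (\<Sum>i<m. al n i * relu (\<beta> * t + bb n i))"
    proof (rule sum.cong[OF refl])
      fix i
      have "1 / s * t + bb n i / (\<beta> * s) = (1 / (\<beta> * s)) * (\<beta> * t + bb n i)"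
        using b s0 by (simp add: field_simps)
      moreover have "relu ((1 / (\<beta> * s)) * (\<beta> * t + bb n i)) = (1 / (\<beta> * s)) * relu (\<beta> * t + bb n i)"
        by (rule relu_scale) (use b s0 in simp)
      ultimately have "relu (1 / s * t + bb n i / (\<beta> * s)) = (1 / (\<beta> * s)) * relu (\<beta> * t + bb n i)"
        by simp
      then show "al n i * \<beta> * s * relu (1 / s * t + bb n i / (\<beta> * s)) = al n i * relu (\<beta> * t + bb n i)"
        using b s0 by simp
    qed
    also have "\<dots> = sawtooth n (\<beta> * t)" using saw_eq m by simp
    finally show "sawtooth n (\<beta> * t) = relu_net a u q t" by simp
  next
    have "dotp u q = (\<Sum>i<m. bb n i) / (\<beta> * s * s)"
      by (simp add: dotp_def u_def q_def sum_divide_distrib mult_ac)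
    then show "dotp u q = 0" using sum_bb m by simp
  next
    have "(\<Sum>i<m. (u ! i)^2) = real m * (1 / s)^2" by (simp add: u_def)
    also have "\<dots> = 1" using ss s0 by (simp add: m_def add: power2_eq_square field_simps)
    finally show "enorm u = 1" by (simp add: enorm_def u_def)
  next
    have ea: "(enorm a)^2 = (\<Sum>i<m. (al n i)^2) * \<beta>^2 * real m"
      by (simp add: enorm_def a_def sum_nonneg power_mult_distrib sum_distrib_right ss power2_eq_square[of s] mult.assoc)
    have eq: "(enorm q)^2 = (\<Sum>i<m. (bb n i)^2) / (\<beta>^2 * real m)"
      by (simp add: enorm_def q_def sum_nonneg power_mult_distrib sum_divide_distrib ss power2_eq_square[of s] power_divide)
    have s1: "(\<Sum>i<m. (al n i)^2) \<le> real m * (16 * (real n)^2)"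
      using sum_mono[of "{..<m}" "\<lambda>i. (al n i)^2" "\<lambda>i. 16 * (real n)^2"] al_bound by simp
    have s2: "(\<Sum>i<m. (bb n i)^2) \<le> real m * 1"
    proof -
      have "(\<Sum>i<m. (bb n i)^2) \<le> (\<Sum>i<m. 1)"
      proof (rule sum_mono)
        fix i assume "i \<in> {..<m}"
        then have "\<bar>bb n i\<bar> \<le> 1" using bb_bound m by simp
        then show "(bb n i)^2 \<le> 1" by (metis abs_le_square_iff abs_one power_one)
      qed
      then show ?thesis by simp
    qed
    have mn: "(real m)^2 * (real n)^2 \<le> 16 * real n ^ 4"
    proof (cases "n = 0")
      case False
      then have "real m \<le> 4 * real n" by (simp add: m_def)
      then have "(real m)^2 \<le> (4 * real n)^2" by (rule power_mono) simp
      then have "(real m)^2 * (real n)^2 \<le> (4 * real n)^2 * (real n)^2"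
        by (rule mult_right_mono) simp
      then show ?thesis by (simp add: power_mult_distrib power2_eq_square power4_eq_xxxx mult.assoc)
    qed simp
    have m0: "real m > 0" by (simp add: m_def)
    have "(enorm a)^2 \<le> real m * (16 * (real n)^2) * \<beta>^2 * real m"
      unfolding ea using s1 b m0 by (intro mult_right_mono) auto
    also have "\<dots> = 16 * ((real m)^2 * (real n)^2) * \<beta>^2" by (simp add: power2_eq_square)
    also have "\<dots> \<le> 16 * (16 * real n ^ 4) * \<beta>^2" using mn by (intro mult_right_mono) auto
    finally have A: "(enorm a)^2 \<le> 256 * real n ^ 4 * \<beta>^2" by simp
    have "(enorm q)^2 \<le> real m / (\<beta>^2 * real m)"
      unfolding eq using s2 b m0 by (intro divide_right_mono) auto
    also have "\<dots> = 1 / \<beta>^2" using m0 by simp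
    finally have B: "(enorm q)^2 \<le> 1 / \<beta>^2" .
    have "1 / \<beta>^2 \<le> 256 * (1 / \<beta>^2)" by (rule mult_le_cancel_right1[THEN iffD2]) (simp add: zero_le_divide_iff)
    then show "(enorm a)^2 + (enorm q)^2 \<le> 256 * (real n ^ 4 * \<beta>^2 + 1 / \<beta>^2)"
      using A B unfolding distrib_left by linarith
  qed
qed simp

end
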